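(* Let $\mu>0$, $\beta\ge0$, $f\in C^\infty([0,1])$ with $f>0$ on $(0,1)$, and $F(x_1):=\int_{x_1}^1f(s)\,ds$. Consider $$\mathcal E(\alpha):=\frac{\mu}{4\pi}\int_0^1|\alpha'|^2\,dx_1+\beta\int_0^1F\sin\alpha\,dx_1$$ on $\{\alpha\in H^1(0,1):\alpha(0)=0\}$. Then $\mathcal E$ has a unique minimizer $\alpha_*$; it satisfies $\alpha_*\in C^2([0,1])$, $\alpha_*(x_1)\in[-\frac\pi2,0]$ for all $x_1$, and it is a classical solution of $$-\tfrac{\mu}{2\pi}\alpha''+\beta F\cos\alpha=0\ \text{ on }(0,1),\qquad\alpha(0)=0,\ \alpha'(1)=0.$$ *)

theory Defs
  imports "HOL-Analysis.Analysis"
begin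

definition smooth_on_cl01 :: "(real \<Rightarrow> real) \<Rightarrow> bool" where
  "smooth_on_cl01 f \<longleftrightarrow> (\<exists>D :: nat \<Rightarrow> real \<Rightarrow> real.
      (\<forall>x\<in>{0..1}. D 0 x = f x) \<and>
      (\<forall>k. continuous_on {0..1} (D k)) \<and>
      (\<forall>k. \<forall>x\<in>{0..1}. (D k has_real_derivative D (Suc k) x) (at x within {0..1})))"

text \<open>alpha belongs to H^1(0,1) with (weak) derivative g: g is in L^2(0,1) and
  alpha is (the continuous representative) alpha(x) = alpha(0) + int_0^x g on [0,1].\<close>
definition H1_with_deriv :: "(real \<Rightarrow> real) \<Rightarrow> (real \<Rightarrow> real) \<Rightarrow> bool" where
  "H1_with_deriv \<alpha> g \<longleftrightarrow>
     g \<in> borel_measurable lborel \<and>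
     set_integrable lborel {0..1} g \<and>
     set_integrable lborel {0..1} (\<lambda>x. (g x)\<^sup>2) \<and>
     (\<forall>x\<in>{0..1}. \<alpha> x = \<alpha> 0 + (LBINT s=0..x. g s))"

definition Fprim :: "(real \<Rightarrow> real) \<Rightarrow> real \<Rightarrow> real" where
  "Fprim f x = (LBINT s=x..1. f s)"

definition energy :: "real \<Rightarrow> real \<Rightarrow> (real \<Rightarrow> real) \<Rightarrow> (real \<Rightarrow> real) \<Rightarrow> (real \<Rightarrow> real) \<Rightarrow> real" where
  "energy \<mu> \<beta> f \<alpha> g =
     \<mu> / (4 * pi) * (LBINT x=0..1. (g x)\<^sup>2) + \<beta> * (LBINT x=0..1. Fprim f x * sin (\<alpha> x))"

definition is_minimizer :: "real \<Rightarrow> real \<Rightarrow> (real \<Rightarrow> real) \<Rightarrow> (real \<Rightarrow> real) \<Rightarrow> bool" where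
  "is_minimizer \<mu> \<beta> f \<alpha> \<longleftrightarrow> \<alpha> 0 = 0 \<and>
     (\<exists>g. H1_with_deriv \<alpha> g \<and>
        (\<forall>\<gamma> h. \<gamma> 0 = 0 \<and> H1_with_deriv \<gamma> h \<longrightarrow> energy \<mu> \<beta> f \<alpha> g \<le> energy \<mu> \<beta> f \<gamma> h))"

definition C2_cl01 :: "(real \<Rightarrow> real) \<Rightarrow> (real \<Rightarrow> real) \<Rightarrow> (real \<Rightarrow> real) \<Rightarrow> bool" where
  "C2_cl01 \<alpha> a1 a2 \<longleftrightarrow>
     (\<forall>x\<in>{0..1}. (\<alpha> has_real_derivative a1 x) (at x within {0..1})) \<and>
     (\<forall>x\<in>{0..1}. (a1 has_real_derivative a2 x) (at x within {0..1})) \<and>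
     continuous_on {0..1} a2"

end

theory Submission
  imports Defs
begin

definition Kop :: "(real \<Rightarrow> real) \<Rightarrow> real \<Rightarrow> real" where
  "Kop Q y = integral {y..1} (\<lambda>s. (s - y) * Q s)"

lemma Kop_split:
  assumes "continuous_on {0..1} Q" "y \<in> {0..1}"
  shows "Kop Q y = integral {y..1} (\<lambda>s. s * Q s) - y * integral {y..1} Q"
proof -
  have c1: "continuous_on {y..1} Q" using assms by (auto intro: continuous_on_subset)
  have i1: "(\<lambda>s. s * Q s) integrable_on {y..1}"
    by (intro integrable_continuous_real continuous_intros c1)
  have i2: "(\<lambda>s. y * Q s) integrable_on {y..1}"
    by (intro integrable_continuous_real continuous_intros c1)
  have "Kop Q y = integral {y..1} (\<lambda>s. s * Q s - y * Q s)"
    unfolding Kop_def by (simp add: algebra_simps)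
  also have "\<dots> = integral {y..1} (\<lambda>s. s * Q s) - integral {y..1} (\<lambda>s. y * Q s)"
    by (rule integral_diff[OF i1 i2])
  also have "integral {y..1} (\<lambda>s. y * Q s) = y * integral {y..1} Q"
    by simp
  finally show ?thesis .
qed

lemma Kop_deriv:
  assumes "continuous_on {0..1} Q" "y \<in> {0..1}"
  shows "(Kop Q has_real_derivative - integral {y..1} Q) (at y within {0..1})"
proof -
  have d1: "((\<lambda>x. integral {x..1} (\<lambda>s. s * Q s)) has_real_derivative - (y * Q y)) (at y within {0..1})"
    by (rule integral_has_real_derivative') (use assms in \<open>auto intro!: continuous_intros\<close>)
  have d2: "((\<lambda>x. integral {x..1} Q) has_real_derivative - Q y) (at y within {0..1})"
    by (rule integral_has_real_derivative') (use assms in \<open>auto intro!: continuous_intros\<close>)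
  have d: "((\<lambda>x. integral {x..1} (\<lambda>s. s * Q s) - x * integral {x..1} Q) has_real_derivative
      - integral {y..1} Q) (at y within {0..1})"
    by (rule DERIV_diff[OF d1 DERIV_mult[OF DERIV_ident d2], THEN DERIV_cong]) (simp add: algebra_simps)
  have e: True by simp
  show ?thesis
    apply (rule has_field_derivative_transform_within[where d=1 and f="\<lambda>x. integral {x..1} (\<lambda>s. s * Q s) - x * integral {x..1} Q"])
    using d e assms Kop_split[OF assms(1)] by (auto simp: dist_real_def)
qed

lemma Kop_cont:
  assumes "continuous_on {0..1} Q"
  shows "continuous_on {0..1} (Kop Q)"
  using Kop_deriv[OF assms]
  by (meson DERIV_continuous continuous_on_eq_continuous_within)

definition clamp01 :: "real \<Rightarrow> real" where "clamp01 x = max 0 (min 1 x)"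
definition cc :: "real \<Rightarrow> real" where "cc y = cos (max (-pi/2) (min 0 y))"

lemma clamp01_in: "clamp01 x \<in> {0..1}" by (auto simp: clamp01_def)
lemma clamp01_id: "x \<in> {0..1} \<Longrightarrow> clamp01 x = x" by (auto simp: clamp01_def)
lemma continuous_clamp01: "continuous_on S clamp01"
  unfolding clamp01_def by (intro continuous_intros)

lemma cos_lip: "\<bar>cos w - cos z\<bar> \<le> \<bar>w - z\<bar>" for w z :: real
proof -
  have "\<bar>cos w - cos z\<bar> = 2 * \<bar>sin ((w + z) / 2)\<bar> * \<bar>sin ((z - w) / 2)\<bar>"
    by (simp add: cos_diff_cos abs_mult)
  also have "\<dots> \<le> 2 * 1 * \<bar>(z - w) / 2\<bar>"
    by (intro mult_mono abs_sin_x_le_abs_x) auto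
  finally show ?thesis by simp
qed

lemma cc_lip: "\<bar>cc y - cc z\<bar> \<le> \<bar>y - z\<bar>"
  unfolding cc_def by (rule order_trans[OF cos_lip]) auto

lemma cc_nonneg: "0 \<le> cc y"
  unfolding cc_def by (rule cos_ge_zero) (auto simp: max_def min_def)

lemma cc_eq: "-pi/2 \<le> y \<Longrightarrow> y \<le> 0 \<Longrightarrow> cc y = cos y"
  unfolding cc_def by (simp add: max_def min_def)

lemma cont_bounded_on01:
  assumes "continuous_on {0..1} (g::real \<Rightarrow> real)"
  obtains B where "\<And>y. y \<in> {0..1} \<Longrightarrow> \<bar>g y\<bar> \<le> B"
proof -
  have "bounded (g ` {0..1})"
    by (rule compact_imp_bounded[OF compact_continuous_image[OF assms compact_Icc]])
  then obtain B where "\<And>z. z \<in> g ` {0..1} \<Longrightarrow> norm z \<le> B" by (auto simp: bounded_iff)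
  then show ?thesis using that by force
qed

lemma exp_integral:
  fixes L y :: real
  assumes "L > 0" "y \<le> 1"
  shows "integral {y..1} (\<lambda>s. exp (L * (1 - s))) = (exp (L * (1 - y)) - 1) / L"
proof -
  have D: "((\<lambda>s. - exp (L * (1 - s)) / L) has_vector_derivative exp (L * (1 - x))) (at x within {y..1})"
    if "x \<in> {y..1}" for x
  proof -
    have "((\<lambda>s. - exp (L * (1 - s)) / L) has_real_derivative exp (L * (1 - x))) (at x within {y..1})"
      using assms by (auto intro!: derivative_eq_intros)
    then show ?thesis by (simp add: has_real_derivative_iff_has_vector_derivative)
  qed
  from fundamental_theorem_of_calculus[OF assms(2) D]
  show ?thesis using assms by (simp add: integral_unique field_simps)
qed

locale bvp =
  fixes P :: "real \<Rightarrow> real" and M :: real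
  assumes Pc: "continuous_on {0..1} P" and Pnn: "\<And>x. x \<in> {0..1} \<Longrightarrow> 0 \<le> P x"
    and PM: "\<And>x. x \<in> {0..1} \<Longrightarrow> P x \<le> M"
begin

definition "LL = 2 * M + 1"
definition "rho x = exp (- LL * (1 - clamp01 x))"
definition "Qf u s = P s * cc (u s)"
definition "Tf a u x = a + Kop (Qf u) (clamp01 x)"
definition "Wf a v x = rho x * Tf a (\<lambda>s. v s / rho s) x"

lemma M_nonneg: "0 \<le> M" using Pnn[of 0] PM[of 0] by auto
lemma LL_pos: "0 < LL" using M_nonneg by (simp add: LL_def)

lemma rho_pos: "0 < rho x" by (simp add: rho_def)
lemma rho_nz[simp]: "rho x \<noteq> 0" using rho_pos[of x] by simp
lemma rho_le1: "rho x \<le> 1"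
  using LL_pos clamp01_in[of x] by (auto simp: rho_def mult_nonneg_nonneg)
lemma rho_cont: "continuous_on S rho"
  unfolding rho_def by (intro continuous_intros continuous_clamp01)

lemma Qf_cont: "continuous_on {0..1} u \<Longrightarrow> continuous_on {0..1} (Qf u)"
  unfolding Qf_def cc_def by (intro continuous_intros Pc) auto

lemma Wf_cont:
  assumes "continuous_on UNIV v"
  shows "continuous_on UNIV (Wf a v)"
proof -
  have cu: "continuous_on {0..1} (\<lambda>s. v s / rho s)"
    using rho_pos by (intro continuous_intros rho_cont continuous_on_subset[OF assms]) auto
  have k: "continuous_on {0..1} (Kop (Qf (\<lambda>s. v s / rho s)))"
    by (rule Kop_cont[OF Qf_cont[OF cu]])
  have "continuous_on UNIV (Kop (Qf (\<lambda>s. v s / rho s)) \<circ> clamp01)"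
    by (rule continuous_on_compose[OF continuous_clamp01 continuous_on_subset[OF k]])
      (use clamp01_in in auto)
  then show ?thesis unfolding Wf_def Tf_def
    by (intro continuous_intros rho_cont) (simp add: o_def)
qed

lemma Wf_bounded:
  assumes "continuous_on UNIV v"
  obtains B where "\<And>x. norm (Wf a v x) \<le> B"
proof -
  have cu: "continuous_on {0..1} (\<lambda>s. v s / rho s)"
    using rho_pos by (intro continuous_intros rho_cont continuous_on_subset[OF assms]) auto
  have k: "continuous_on {0..1} (\<lambda>y. a + Kop (Qf (\<lambda>s. v s / rho s)) y)"
    by (intro continuous_intros Kop_cont[OF Qf_cont[OF cu]])
  obtain B where B: "\<And>y. y \<in> {0..1} \<Longrightarrow> \<bar>a + Kop (Qf (\<lambda>s. v s / rho s)) y\<bar> \<le> B"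
    using cont_bounded_on01[OF k] by blast
  have "norm (Wf a v x) \<le> B" for x
  proof -
    have "norm (Wf a v x) = rho x * \<bar>a + Kop (Qf (\<lambda>s. v s / rho s)) (clamp01 x)\<bar>"
      using rho_pos[of x] by (simp add: Wf_def Tf_def abs_mult)
    also have "\<dots> \<le> 1 * B"
      using B[OF clamp01_in] rho_le1[of x] rho_pos[of x]
      by (intro mult_mono) auto
    finally show ?thesis by simp
  qed
  then show ?thesis using that by blast
qed

lemma Wf_in: "Wf a (apply_bcontfun v) \<in> bcontfun"
proof -
  obtain B where "\<And>x. norm (Wf a (apply_bcontfun v) x) \<le> B"
    using Wf_bounded[of "apply_bcontfun v"] by auto
  then show ?thesis by (intro bcontfun_normI Wf_cont) auto
qed

definition "W a v = Bcontfun (Wf a (apply_bcontfun v))"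

lemma W_apply: "apply_bcontfun (W a v) x = Wf a (apply_bcontfun v) x"
  unfolding W_def using Wf_in by (simp add: Bcontfun_inverse)

lemma Kop_diff_bound:
  assumes Q1: "continuous_on {0..1} Q1" and Q2: "continuous_on {0..1} Q2" and y: "y \<in> {0..1}"
    and b: "\<And>s. s \<in> {0..1} \<Longrightarrow> \<bar>Q1 s - Q2 s\<bar> \<le> g s" and g: "continuous_on {0..1} g"
  shows "\<bar>Kop Q1 y - Kop Q2 y\<bar> \<le> integral {y..1} g"
proof -
  have c1: "continuous_on {y..1} Q1" "continuous_on {y..1} Q2" "continuous_on {y..1} g"
    using Q1 Q2 g y by (auto intro: continuous_on_subset)
  have i1: "(\<lambda>s. (s - y) * Q1 s) integrable_on {y..1}" "(\<lambda>s. (s - y) * Q2 s) integrable_on {y..1}"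
    by (intro integrable_continuous_real continuous_intros c1)+
  have "Kop Q1 y - Kop Q2 y = integral {y..1} (\<lambda>s. (s - y) * Q1 s - (s - y) * Q2 s)"
    unfolding Kop_def by (rule integral_diff[OF i1, symmetric])
  also have "norm \<dots> \<le> integral {y..1} g"
  proof (rule integral_norm_bound_integral)
    show "(\<lambda>s. (s - y) * Q1 s - (s - y) * Q2 s) integrable_on {y..1}"
      by (intro integrable_continuous_real continuous_intros c1)
    show "g integrable_on {y..1}" by (intro integrable_continuous_real c1)
    fix s assume s: "s \<in> {y..1}"
    have "\<bar>(s - y) * Q1 s - (s - y) * Q2 s\<bar> = (s - y) * \<bar>Q1 s - Q2 s\<bar>"
      using s by (simp add: abs_mult right_diff_distrib[symmetric])
    also have "\<dots> \<le> 1 * g s"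
      using s y b[of s] by (intro mult_mono) auto
    finally show "norm ((s - y) * Q1 s - (s - y) * Q2 s) \<le> g s" by simp
  qed
  finally show ?thesis by simp
qed

end

context bvp begin

lemma W_contr: "dist (W a v1) (W a v2) \<le> 1/2 * dist v1 v2"
proof (rule dist_bound)
  fix x
  let ?D = "dist v1 v2"
  let ?u1 = "\<lambda>s. apply_bcontfun v1 s / rho s" and ?u2 = "\<lambda>s. apply_bcontfun v2 s / rho s"
  define y where "y = clamp01 x"
  have y: "y \<in> {0..1}" using clamp01_in y_def by auto
  have cu1: "continuous_on {0..1} ?u1" and cu2: "continuous_on {0..1} ?u2"
    by (intro continuous_intros rho_cont; simp)+
  have b: "\<bar>Qf ?u1 s - Qf ?u2 s\<bar> \<le> M * ?D * exp (LL * (1 - s))" if s: "s \<in> {0..1}" for s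
  proof -
    have "\<bar>Qf ?u1 s - Qf ?u2 s\<bar> = P s * \<bar>cc (?u1 s) - cc (?u2 s)\<bar>"
      using Pnn[OF s] by (simp add: Qf_def abs_mult right_diff_distrib[symmetric])
    also have "\<dots> \<le> M * \<bar>?u1 s - ?u2 s\<bar>"
      using Pnn[OF s] PM[OF s] cc_lip by (intro mult_mono) auto
    also have "\<bar>?u1 s - ?u2 s\<bar> = dist (apply_bcontfun v1 s) (apply_bcontfun v2 s) / rho s"
      using rho_pos[of s] by (simp add: dist_real_def diff_divide_distrib[symmetric] abs_div)
    also have "\<dots> \<le> ?D / rho s"
      using rho_pos[of s] by (intro divide_right_mono dist_bounded) auto
    also have "?D / rho s = ?D * exp (LL * (1 - s))"
      using clamp01_id[OF s] by (simp add: rho_def exp_minus field_simps exp_add[symmetric])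
    finally show ?thesis using M_nonneg by (simp add: mult_left_mono mult.assoc)
  qed
  have gc: "continuous_on {0..1} (\<lambda>s. M * ?D * exp (LL * (1 - s)))"
    by (intro continuous_intros)
  have k: "\<bar>Kop (Qf ?u1) y - Kop (Qf ?u2) y\<bar> \<le> integral {y..1} (\<lambda>s. M * ?D * exp (LL * (1 - s)))"
    by (rule Kop_diff_bound[OF Qf_cont[OF cu1] Qf_cont[OF cu2] y b gc])
  also have "\<dots> = M * ?D * ((exp (LL * (1 - y)) - 1) / LL)"
    using exp_integral[OF LL_pos, of y] y by simp
  also have "\<dots> \<le> M * ?D * (exp (LL * (1 - y)) / LL)"
    using M_nonneg LL_pos by (intro mult_left_mono divide_right_mono) auto
  finally have k2: "\<bar>Kop (Qf ?u1) y - Kop (Qf ?u2) y\<bar> \<le> M * ?D * (exp (LL * (1 - y)) / LL)" .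
  have "dist (apply_bcontfun (W a v1) x) (apply_bcontfun (W a v2) x)
      = rho x * \<bar>Kop (Qf ?u1) y - Kop (Qf ?u2) y\<bar>"
    using rho_pos[of x]
    by (simp add: W_apply Wf_def Tf_def y_def dist_real_def abs_mult right_diff_distrib[symmetric])
  also have "\<dots> \<le> rho x * (M * ?D * (exp (LL * (1 - y)) / LL))"
    using rho_pos[of x] k2 by (intro mult_left_mono) auto
  also have "\<dots> = M / LL * ?D"
    by (simp add: rho_def y_def[symmetric] exp_minus field_simps exp_add[symmetric])
  also have "\<dots> \<le> 1/2 * ?D"
    using M_nonneg LL_pos by (intro mult_right_mono) (auto simp: LL_def field_simps)
  finally show "dist (apply_bcontfun (W a v1) x) (apply_bcontfun (W a v2) x) \<le> 1/2 * ?D" .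
qed

lemma W_fix: "\<exists>!v. W a v = v"
  apply (rule banach_fix_type[of "1/2"])
    apply simp
   apply simp
  using W_contr by blast

definition "vfix a = (THE v. W a v = v)"
lemma vfix: "W a (vfix a) = vfix a"
  unfolding vfix_def by (rule theI'[OF W_fix])
lemma vfix_unique: "W a v = v \<Longrightarrow> vfix a = v"
  using W_fix vfix by blast

lemma W_param: "dist (W a v) (W b v) \<le> \<bar>a - b\<bar>"
proof (rule dist_bound)
  fix x
  have "dist (apply_bcontfun (W a v) x) (apply_bcontfun (W b v) x) = rho x * \<bar>a - b\<bar>"
    using rho_pos[of x] by (simp add: W_apply Wf_def Tf_def dist_real_def abs_mult right_diff_distrib[symmetric])
  also have "\<dots> \<le> 1 * \<bar>a - b\<bar>" using rho_le1[of x] by (intro mult_right_mono) auto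
  finally show "dist (apply_bcontfun (W a v) x) (apply_bcontfun (W b v) x) \<le> \<bar>a - b\<bar>" by simp
qed

lemma vfix_lip: "dist (vfix a) (vfix b) \<le> 2 * \<bar>a - b\<bar>"
proof -
  have "dist (vfix a) (vfix b) = dist (W a (vfix a)) (W b (vfix b))" by (simp add: vfix)
  also have "\<dots> \<le> dist (W a (vfix a)) (W b (vfix a)) + dist (W b (vfix a)) (W b (vfix b))"
    by (rule dist_triangle)
  also have "\<dots> \<le> \<bar>a - b\<bar> + 1/2 * dist (vfix a) (vfix b)"
    by (intro add_mono W_param W_contr)
  finally show ?thesis by simp
qed

definition "ufix a x = apply_bcontfun (vfix a) x / rho x"

lemma ufix_eq: "x \<in> {0..1} \<Longrightarrow> ufix a x = a + Kop (Qf (ufix a)) x"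
proof -
  assume x: "x \<in> {0..1}"
  have "apply_bcontfun (vfix a) x = apply_bcontfun (W a (vfix a)) x" by (simp add: vfix)
  also have "\<dots> = rho x * (a + Kop (Qf (ufix a)) x)"
    by (simp add: W_apply Wf_def Tf_def clamp01_id[OF x] ufix_def[abs_def])
  finally show ?thesis using rho_pos[of x] by (simp add: ufix_def field_simps)
qed

lemma ufix_cont: "continuous_on S (ufix a)"
  unfolding ufix_def by (intro continuous_intros rho_cont) auto

lemma ufix0_lip: "\<bar>ufix a 0 - ufix b 0\<bar> \<le> 2 / rho 0 * \<bar>a - b\<bar>"
proof -
  have "\<bar>ufix a 0 - ufix b 0\<bar> = dist (apply_bcontfun (vfix a) 0) (apply_bcontfun (vfix b) 0) / rho 0"
    using rho_pos[of 0] by (simp add: ufix_def dist_real_def diff_divide_distrib[symmetric] abs_div)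
  also have "\<dots> \<le> 2 * \<bar>a - b\<bar> / rho 0"
    using rho_pos[of 0] by (intro divide_right_mono order_trans[OF dist_bounded vfix_lip]) auto
  finally show ?thesis by simp
qed

lemma ufix0_cont: "continuous_on S (\<lambda>a. ufix a 0)"
proof (rule continuous_onI)
  fix a e :: real assume e: "0 < e"
  let ?C = "2 / rho 0"
  have C: "0 < ?C" using rho_pos[of 0] by simp
  show "\<exists>d>0. \<forall>x'\<in>S. dist x' a < d \<longrightarrow> dist (ufix x' 0) (ufix a 0) \<le> e"
  proof (intro exI[of _ "e / ?C"] conjI ballI impI)
    show "0 < e / ?C" using e C by simp
    fix b assume "b \<in> S" "dist b a < e / ?C"
    then have "?C * \<bar>b - a\<bar> \<le> e" using C by (simp add: dist_real_def field_simps)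
    then show "dist (ufix b 0) (ufix a 0) \<le> e"
      using ufix0_lip[of b a] by (simp add: dist_real_def)
  qed
qed

end

lemma Kop_nonneg:
  assumes "continuous_on {0..1} Q" "\<And>s. s \<in> {0..1} \<Longrightarrow> 0 \<le> Q s" "y \<in> {0..1}"
  shows "0 \<le> Kop Q y"
  unfolding Kop_def
proof (rule Henstock_Kurzweil_Integration.integral_nonneg)
  have "continuous_on {y..1} Q" using assms by (auto intro: continuous_on_subset)
  then show "(\<lambda>s. (s - y) * Q s) integrable_on {y..1}"
    by (intro integrable_continuous_real continuous_intros)
  fix s assume "s \<in> {y..1}" then show "0 \<le> (s - y) * Q s" using assms by auto
qed

lemma Kop_anti:
  assumes "continuous_on {0..1} Q" "\<And>s. s \<in> {0..1} \<Longrightarrow> 0 \<le> Q s" "y \<in> {0..1}"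
  shows "Kop Q y \<le> Kop Q 0"
proof -
  have c: "continuous_on {y..1} Q" using assms by (auto intro: continuous_on_subset)
  have "Kop Q y \<le> integral {y..1} (\<lambda>s. s * Q s)"
    unfolding Kop_def
    by (rule integral_le) (use assms in \<open>auto intro!: integrable_continuous_real continuous_intros c mult_right_mono\<close>)
  also have "\<dots> \<le> integral {0..1} (\<lambda>s. s * Q s)"
    by (rule integral_subset_le) (use assms in \<open>auto intro!: integrable_continuous_real continuous_intros c\<close>)
  also have "\<dots> = Kop Q 0" by (simp add: Kop_def)
  finally show ?thesis .
qed

context bvp begin

lemma Qf_nonneg: "s \<in> {0..1} \<Longrightarrow> 0 \<le> Qf u s"
  unfolding Qf_def using Pnn cc_nonneg by simp

lemma ufix_ge:
  assumes x: "x \<in> {0..1}" shows "a \<le> ufix a x"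
proof -
  have "0 \<le> Kop (Qf (ufix a)) x" by (rule Kop_nonneg[OF Qf_cont[OF ufix_cont] Qf_nonneg x])
  then show ?thesis using ufix_eq[OF x, of a] by linarith
qed

lemma ufix_le0:
  assumes x: "x \<in> {0..1}" shows "ufix a x \<le> ufix a 0"
proof -
  have "Kop (Qf (ufix a)) x \<le> Kop (Qf (ufix a)) 0" by (rule Kop_anti[OF Qf_cont[OF ufix_cont] Qf_nonneg x])
  then show ?thesis using ufix_eq[OF x, of a] ufix_eq[of 0 a] by simp
qed

lemma ufix_pi2: "ufix (-pi/2) 0 = -pi/2"
proof -
  define v0f where "v0f = (\<lambda>x. rho x * (-pi/2))"
  have inb: "v0f \<in> bcontfun"
  proof (rule bcontfun_normI)
    show "continuous_on UNIV v0f" unfolding v0f_def by (intro continuous_intros rho_cont)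
    fix x show "norm (v0f x) \<le> pi/2"
      using rho_le1[of x] rho_pos[of x] by (simp add: v0f_def abs_mult)
  qed
  define v0 where "v0 = Bcontfun v0f"
  have ap: "apply_bcontfun v0 = v0f" unfolding v0_def using inb by (simp add: Bcontfun_inverse)
  have q: "Qf (\<lambda>s. v0f s / rho s) = (\<lambda>s. 0)"
    by (rule ext) (simp add: Qf_def v0f_def cc_def)
  have "W (-pi/2) v0 = v0"
    by (rule bcontfun_eqI) (simp add: W_apply ap Wf_def Tf_def q Kop_def, simp add: v0f_def)
  then have "vfix (-pi/2) = v0" by (rule vfix_unique)
  then show ?thesis by (simp add: ufix_def ap v0f_def)
qed

lemma bvp_solution:
  "\<exists>u a1 a2 a. -pi/2 < a \<and> a \<le> 0 \<and>
     (\<forall>x\<in>{0..1}. (u has_real_derivative a1 x) (at x within {0..1})) \<and>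
     (\<forall>x\<in>{0..1}. (a1 has_real_derivative a2 x) (at x within {0..1})) \<and>
     continuous_on {0..1} a2 \<and>
     (\<forall>x\<in>{0..1}. a2 x = P x * cos (u x)) \<and> u 0 = 0 \<and> a1 1 = 0 \<and>
     (\<forall>x\<in>{0..1}. a \<le> u x \<and> u x \<le> 0) \<and>
     (\<forall>x\<in>{0..1}. a1 x = - integral {x..1} a2)"
proof -
  have "\<exists>a. -pi/2 \<le> a \<and> a \<le> 0 \<and> ufix a 0 = 0"
    by (rule IVT') (simp_all add: ufix_pi2[simplified] ufix_ge ufix0_cont)
  then obtain a where a: "-pi/2 \<le> a" "a \<le> 0" "ufix a 0 = 0" by blast
  have a': "-pi/2 < a" using a ufix_pi2 by (cases "a = -pi/2") auto
  define u where "u = ufix a"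
  define Q where "Q = Qf u"
  have Qc: "continuous_on {0..1} Q" unfolding Q_def u_def by (rule Qf_cont[OF ufix_cont])
  have ueq: "\<And>x. x \<in> {0..1} \<Longrightarrow> u x = a + Kop Q x"
    unfolding u_def Q_def by (rule ufix_eq)
  have ub: "\<forall>x\<in>{0..1}. a \<le> u x \<and> u x \<le> 0"
  proof
    fix x :: real assume x: "x \<in> {0..1}"
    show "a \<le> u x \<and> u x \<le> 0" using ufix_ge[OF x, of a] ufix_le0[OF x, of a] a(3) unfolding u_def by simp
  qed
  define a1 where "a1 = (\<lambda>x. - integral {x..1} Q)"
  have d1: "\<forall>x\<in>{0..1}. (u has_real_derivative a1 x) (at x within {0..1})"
  proof
    fix x :: real assume x: "x \<in> {0..1}"
    have "((\<lambda>y. a + Kop Q y) has_real_derivative (0 + - integral {x..1} Q)) (at x within {0..1})"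
      by (intro DERIV_add DERIV_const Kop_deriv[OF Qc x])
    then have "((\<lambda>y. a + Kop Q y) has_real_derivative a1 x) (at x within {0..1})"
      by (simp add: a1_def)
    then show "(u has_real_derivative a1 x) (at x within {0..1})"
      by (rule has_field_derivative_transform_within[where d=1]) (use x in \<open>simp_all add: ueq\<close>)
  qed
  have d2: "\<forall>x\<in>{0..1}. (a1 has_real_derivative Q x) (at x within {0..1})"
  proof
    fix x :: real assume x: "x \<in> {0..1}"
    show "(a1 has_real_derivative Q x) (at x within {0..1})"
      unfolding a1_def using DERIV_minus[OF integral_has_real_derivative'[OF Qc x]] by simp
  qed
  have qe: "\<forall>x\<in>{0..1}. Q x = P x * cos (u x)"
    using ub a' by (auto simp: Q_def Qf_def cc_eq)
  show ?thesis
    apply (rule exI[of _ u], rule exI[of _ a1], rule exI[of _ Q], rule exI[of _ a])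
    using a a' d1 d2 Qc qe ub unfolding a1_def u_def by simp
qed

end

lemma cont_ext01:
  assumes "continuous_on {0..1} g"
  shows "continuous_on UNIV (\<lambda>t. g (clamp01 t))"
  by (rule continuous_on_compose[OF continuous_clamp01 continuous_on_subset[OF assms], unfolded o_def])
     (use clamp01_in in auto)

lemma si_cont_mult:
  fixes g h :: "real \<Rightarrow> real"
  assumes gc: "continuous_on {0..1} g" and hm: "h \<in> borel_measurable lborel"
    and hi: "set_integrable lborel {0..1} h"
  shows "set_integrable lborel {0..1} (\<lambda>t. g t * h t)"
proof -
  define G where "G = (\<lambda>t. g (clamp01 t))"
  have Gc: "continuous_on UNIV G" unfolding G_def by (rule cont_ext01[OF gc])
  have Gm[measurable]: "G \<in> borel_measurable borel" by (rule borel_measurable_continuous_onI[OF Gc])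
  have hm'[measurable]: "h \<in> borel_measurable borel" using hm by simp
  obtain B where B: "\<And>y. y \<in> {0..1} \<Longrightarrow> \<bar>g y\<bar> \<le> B" using cont_bounded_on01[OF gc] by blast
  have GB: "\<bar>G t\<bar> \<le> B" for t unfolding G_def using B[OF clamp01_in] .
  have "integrable lborel (\<lambda>t. indicator {0..1} t *\<^sub>R (G t * h t))"
  proof (rule Bochner_Integration.integrable_bound)
    show "integrable lborel (\<lambda>t. B * (indicator {0..1} t *\<^sub>R h t))"
      using hi unfolding set_integrable_def by (rule integrable_mult_right)
    show "(\<lambda>t. indicator {0..1} t *\<^sub>R (G t * h t)) \<in> borel_measurable lborel"
      by measurable
    show "AE x in lborel. norm (indicator {0..1} x *\<^sub>R (G x * h x)) \<le> norm (B * (indicator {0..1} x *\<^sub>R h x))"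
    proof (rule AE_I2)
      fix x
      have "\<bar>G x * h x\<bar> \<le> B * \<bar>h x\<bar>" using GB[of x] by (simp add: abs_mult mult_right_mono)
      also have "\<dots> \<le> \<bar>B\<bar> * \<bar>h x\<bar>" by (simp add: mult_right_mono)
      finally show "norm (indicator {0..1} x *\<^sub>R (G x * h x)) \<le> norm (B * (indicator {0..1} x *\<^sub>R h x))"
        by (auto simp: indicator_def abs_mult)
    qed
  qed
  then have "set_integrable lborel {0..1} (\<lambda>t. G t * h t)" by (simp add: set_integrable_def)
  then show ?thesis
    by (rule set_integrable_cong[THEN iffD1, rotated -1]) (auto simp: G_def clamp01_id)
qed

lemma tonelli_part:
  fixes a1 a2 h phi :: "real \<Rightarrow> real"
  assumes a2c: "continuous_on {0..1} a2" and a2nn: "\<And>s. s \<in> {0..1} \<Longrightarrow> 0 \<le> a2 s"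
    and a1e: "\<And>t. t \<in> {0..1} \<Longrightarrow> a1 t = - integral {t..1} a2"
    and hm: "h \<in> borel_measurable lborel" and hi: "set_integrable lborel {0..1} h"
    and phic: "continuous_on {0..1} phi"
    and phib: "\<And>s. s \<in> {0..1} \<Longrightarrow> 0 \<le> phi s \<and> phi s \<le> (LINT t:{0..s}|lborel. \<bar>h t\<bar>)"
  shows "(LINT s:{0..1}|lborel. a2 s * phi s) \<le> (LINT t:{0..1}|lborel. \<bar>h t\<bar> * (- a1 t))"
proof -
  define S :: "real set" where "S = {0..1}"
  define A2 where "A2 = (\<lambda>s. a2 (clamp01 s))"
  have A2c: "continuous_on UNIV A2" unfolding A2_def by (rule cont_ext01[OF a2c])
  have A2m[measurable]: "A2 \<in> borel_measurable borel" by (rule borel_measurable_continuous_onI[OF A2c])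
  have hm'[measurable]: "h \<in> borel_measurable borel" using hm by simp
  have A2S: "\<And>s. s \<in> S \<Longrightarrow> A2 s = a2 s" by (simp add: A2_def S_def clamp01_id)
  have A2nn: "0 \<le> A2 s" for s unfolding A2_def using a2nn clamp01_in by blast
  have a1c: "continuous_on {0..1} a1"
  proof -
    have "continuous_on {0..1} (\<lambda>t. - integral {t..1} a2)"
      by (intro continuous_intros indefinite_integral_continuous_1' integrable_continuous_real a2c)
    then show ?thesis by (rule continuous_on_eq) (simp add: a1e)
  qed
  have habs: "set_integrable lborel {0..1} (\<lambda>t. \<bar>h t\<bar>)" by (rule set_integrable_abs[OF hi])
  have iR: "set_integrable lborel {0..1} (\<lambda>t. \<bar>h t\<bar> * (- a1 t))"
    using si_cont_mult[OF continuous_on_minus[OF a1c] _ habs] hm by (simp add: mult.commute)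
  have iL: "set_integrable lborel {0..1} (\<lambda>s. a2 s * phi s)"
    by (rule borel_integrable_atLeastAtMost') (intro continuous_intros a2c phic)
  have Rnn: "0 \<le> (LINT t:{0..1}|lborel. \<bar>h t\<bar> * (- a1 t))"
  proof -
    have "0 \<le> - a1 t" if "t \<in> {0..1}" for t
    proof -
      have "0 \<le> integral {t..1} a2"
        using that a2nn by (intro Henstock_Kurzweil_Integration.integral_nonneg integrable_continuous_real
            continuous_on_subset[OF a2c]) auto
      then show ?thesis using a1e[OF that] by simp
    qed
    then show ?thesis unfolding set_lebesgue_integral_def real_scaleR_def
      by (intro Bochner_Integration.integral_nonneg) (auto simp: indicator_def mult_nonneg_nonpos)
  qed
  have L1: "ennreal (LINT s:{0..1}|lborel. a2 s * phi s) = (\<integral>\<^sup>+ s. ennreal (indicator S s * (a2 s * phi s)) \<partial>lborel)"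
    unfolding set_lebesgue_integral_def S_def real_scaleR_def real_scaleR_def
    by (rule nn_integral_eq_integral[symmetric]) (use iL phib a2nn in \<open>auto simp: set_integrable_def indicator_def\<close>)
  have Hs: "ennreal (LINT t:{0..s}|lborel. \<bar>h t\<bar>) = (\<integral>\<^sup>+ t. ennreal (indicator {0..s} t * \<bar>h t\<bar>) \<partial>lborel)"
    if "s \<in> S" for s
  proof -
    have "set_integrable lborel {0..s} (\<lambda>t. \<bar>h t\<bar>)"
      by (rule set_integrable_subset[OF habs]) (use that in \<open>auto simp: S_def\<close>)
    then show ?thesis unfolding set_lebesgue_integral_def real_scaleR_def
      by (intro nn_integral_eq_integral[symmetric]) (auto simp: set_integrable_def indicator_def)
  qed
  define f where "f = (\<lambda>s t. ennreal (indicator S s * A2 s * (indicator {0..s} t * \<bar>h t\<bar>)))"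
  have fm: "case_prod f \<in> borel_measurable (lborel \<Otimes>\<^sub>M lborel)"
  proof -
    have e: "case_prod f =
       (\<lambda>p. ennreal (indicator {0..1} (fst p) * A2 (fst p) * ((if 0 \<le> snd p \<and> snd p \<le> fst p then 1 else 0) * \<bar>h (snd p)\<bar>)))"
      by (auto simp: f_def S_def indicator_def fun_eq_iff)
    have m: "(\<lambda>p. ennreal (indicator {0..1} (fst p) * A2 (fst p) * ((if 0 \<le> snd p \<and> snd p \<le> fst p then 1 else 0) * \<bar>h (snd p)\<bar>))) \<in> borel_measurable (borel \<Otimes>\<^sub>M borel)"
      by measurable
    show ?thesis unfolding e
      using m by (simp add: measurable_cong_sets[OF sets_pair_measure_cong[OF sets_lborel sets_lborel] refl])
  qed
  have "(\<integral>\<^sup>+ s. ennreal (indicator S s * (a2 s * phi s)) \<partial>lborel) \<le> (\<integral>\<^sup>+ s. (\<integral>\<^sup>+ t. f s t \<partial>lborel) \<partial>lborel)"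
  proof (rule nn_integral_mono)
    fix s :: real
    show "ennreal (indicator S s * (a2 s * phi s)) \<le> (\<integral>\<^sup>+ t. f s t \<partial>lborel)"
    proof (cases "s \<in> S")
      case False then show ?thesis by simp
    next
      case True
      have m1: "(\<lambda>t. ennreal (indicator {0..s} t * \<bar>h t\<bar>)) \<in> borel_measurable lborel" by measurable
      have "(\<integral>\<^sup>+ t. f s t \<partial>lborel) = ennreal (A2 s) * (\<integral>\<^sup>+ t. ennreal (indicator {0..s} t * \<bar>h t\<bar>) \<partial>lborel)"
        unfolding f_def using True A2nn[of s]
        by (subst nn_integral_cmult[OF m1, symmetric]) (auto intro!: nn_integral_cong simp: ennreal_mult' mult.assoc)
      also have "\<dots> = ennreal (A2 s * (LINT t:{0..s}|lborel. \<bar>h t\<bar>))"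
        using Hs[OF True] A2nn[of s] by (simp add: ennreal_mult')
      also have "ennreal (A2 s * (LINT t:{0..s}|lborel. \<bar>h t\<bar>)) \<ge> ennreal (indicator S s * (a2 s * phi s))"
        using True A2S[OF True] phib[of s] A2nn[of s] by (auto simp: S_def intro!: ennreal_leI mult_left_mono)
      finally show ?thesis by simp
    qed
  qed
  also have "\<dots> = (\<integral>\<^sup>+ t. (\<integral>\<^sup>+ s. f s t \<partial>lborel) \<partial>lborel)"
    by (rule lborel_pair.Fubini'[OF fm, symmetric])
  also have "\<dots> = (\<integral>\<^sup>+ t. ennreal (indicator S t * (\<bar>h t\<bar> * (- a1 t))) \<partial>lborel)"
  proof (rule nn_integral_cong)
    fix t :: real
    have fe: "f s t = ennreal (indicator S t * \<bar>h t\<bar>) * ennreal (indicator {t..1} s * A2 s)" for s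
      unfolding f_def using A2nn[of s]
      by (subst ennreal_mult'[symmetric]) (auto simp: S_def indicator_def intro!: arg_cong[where f=ennreal])
    have m2: "(\<lambda>s. ennreal (indicator {t..1} s * A2 s)) \<in> borel_measurable lborel" by measurable
    have "(\<integral>\<^sup>+ s. f s t \<partial>lborel) = ennreal (indicator S t * \<bar>h t\<bar>) * (\<integral>\<^sup>+ s. ennreal (indicator {t..1} s * A2 s) \<partial>lborel)"
      unfolding fe by (rule nn_integral_cmult[OF m2])
    also have "\<dots> = ennreal (indicator S t * (\<bar>h t\<bar> * (- a1 t)))"
    proof (cases "t \<in> S")
      case False then show ?thesis by simp
    next
      case True
      have ci: "continuous_on {t..1} A2" by (rule continuous_on_subset[OF A2c]) auto
      have si: "set_integrable lborel {t..1} A2" by (rule borel_integrable_atLeastAtMost'[OF ci])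
      have "(\<integral>\<^sup>+ s. ennreal (indicator {t..1} s * A2 s) \<partial>lborel) = ennreal (LINT s:{t..1}|lborel. A2 s)"
        unfolding set_lebesgue_integral_def real_scaleR_def
        by (rule nn_integral_eq_integral) (use si A2nn in \<open>auto simp: set_integrable_def\<close>)
      also have "(LINT s:{t..1}|lborel. A2 s) = integral {t..1} A2"
        by (rule set_borel_integral_eq_integral(2)[OF si])
      also have "integral {t..1} A2 = integral {t..1} a2"
        by (rule integral_cong) (use True in \<open>auto simp: A2_def S_def clamp01_id\<close>)
      also have "\<dots> = - a1 t" using a1e True by (simp add: S_def)
      finally have e2: "(\<integral>\<^sup>+ s. ennreal (indicator {t..1} s * A2 s) \<partial>lborel) = ennreal (- a1 t)" .
      have "0 \<le> - a1 t"
      proof -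
        have "0 \<le> integral {t..1} a2"
          using True a2nn by (intro Henstock_Kurzweil_Integration.integral_nonneg integrable_continuous_real
              continuous_on_subset[OF a2c]) (auto simp: S_def)
        then show ?thesis using a1e True by (simp add: S_def)
      qed
      then show ?thesis using True by (simp add: e2 ennreal_mult'[symmetric] mult.assoc)
    qed
    finally show "(\<integral>\<^sup>+ s. f s t \<partial>lborel) = ennreal (indicator S t * (\<bar>h t\<bar> * (- a1 t)))" .
  qed
  also have "\<dots> = ennreal (LINT t:{0..1}|lborel. \<bar>h t\<bar> * (- a1 t))"
  proof -
    have nn: "0 \<le> indicator S t * (\<bar>h t\<bar> * (- a1 t))" for t
    proof (cases "t \<in> S")
      case True
      have "0 \<le> integral {t..1} a2"
        using True a2nn by (intro Henstock_Kurzweil_Integration.integral_nonneg integrable_continuous_real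
            continuous_on_subset[OF a2c]) (auto simp: S_def)
      then show ?thesis using a1e True by (simp add: S_def)
    qed simp
    show ?thesis unfolding set_lebesgue_integral_def S_def real_scaleR_def
      by (rule nn_integral_eq_integral) (use iR nn in \<open>auto simp: set_integrable_def S_def\<close>)
  qed
  finally have "ennreal (LINT s:{0..1}|lborel. a2 s * phi s) \<le> ennreal (LINT t:{0..1}|lborel. \<bar>h t\<bar> * (- a1 t))"
    using L1 by simp
  then show ?thesis using Rnn by (simp add: ennreal_le_iff)
qed

lemma contI01: "continuous_on {0..1} f \<Longrightarrow> set_integrable lborel {0..1} (f :: real \<Rightarrow> real)"
  by (rule borel_integrable_atLeastAtMost')

lemma deriv_cont_on:
  assumes "\<forall>x\<in>{0..1}. (u has_real_derivative a1 x) (at x within {0..1})"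
  shows "continuous_on {0..1} (u :: real \<Rightarrow> real)"
  using assms by (meson DERIV_continuous continuous_on_eq_continuous_within)

lemma H1_cont:
  fixes h \<gamma> :: "real \<Rightarrow> real"
  assumes hi: "set_integrable lborel {0..1} h"
    and ge: "\<And>x. x \<in> {0..1} \<Longrightarrow> \<gamma> x = (LINT t:{0..x}|lborel. h t)"
  shows "continuous_on {0..1} \<gamma>"
proof -
  have hI: "h integrable_on {0..1}" by (rule set_borel_integral_eq_integral(1)[OF hi])
  have "\<gamma> x = integral {0..x} h" if "x \<in> {0..1}" for x
  proof -
    have "set_integrable lborel {0..x} h" by (rule set_integrable_subset[OF hi]) (use that in auto)
    then show ?thesis using ge[OF that] by (simp add: set_borel_integral_eq_integral(2))
  qed
  moreover have "continuous_on {0..1} (\<lambda>x. integral {0..x} h)"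
    by (rule indefinite_integral_continuous_1[OF hI])
  ultimately show ?thesis by (metis (mono_tags, lifting) continuous_on_eq)
qed

lemma key_ineq:
  fixes F u a1 a2 \<gamma> h :: "real \<Rightarrow> real" and c \<beta> :: real
  assumes c: "0 < c" and \<beta>: "0 \<le> \<beta>"
    and Fc: "continuous_on {0..1} F" and Fnn: "\<And>x. x \<in> {0..1} \<Longrightarrow> 0 \<le> F x"
    and ud: "\<forall>x\<in>{0..1}. (u has_real_derivative a1 x) (at x within {0..1})"
    and a1d: "\<forall>x\<in>{0..1}. (a1 has_real_derivative a2 x) (at x within {0..1})"
    and a2c: "continuous_on {0..1} a2"
    and a1e: "\<And>t. t \<in> {0..1} \<Longrightarrow> a1 t = - integral {t..1} a2"
    and u0: "u 0 = 0" and ub: "\<And>x. x \<in> {0..1} \<Longrightarrow> -pi/2 \<le> u x \<and> u x \<le> 0"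
    and EL: "\<And>x. x \<in> {0..1} \<Longrightarrow> \<beta> * F x * cos (u x) = 2 * c * a2 x"
    and hm: "h \<in> borel_measurable lborel" and hi: "set_integrable lborel {0..1} h"
    and hi2: "set_integrable lborel {0..1} (\<lambda>x. (h x)\<^sup>2)"
    and ge: "\<And>x. x \<in> {0..1} \<Longrightarrow> \<gamma> x = (LINT t:{0..x}|lborel. h t)"
  shows "c * (LINT x:{0..1}|lborel. (a1 x)\<^sup>2) + \<beta> * (LINT x:{0..1}|lborel. F x * sin (u x))
       + \<beta> * (LINT x:{0..1}|lborel. F x * (sin (\<gamma> x) - sin (u x) - cos (u x) * (- min \<bar>\<gamma> x\<bar> (pi/2) - u x)))
       \<le> c * (LINT x:{0..1}|lborel. (h x)\<^sup>2) + \<beta> * (LINT x:{0..1}|lborel. F x * sin (\<gamma> x))"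
proof -
  define phi where "phi = (\<lambda>x. min \<bar>\<gamma> x\<bar> (pi/2))"
  have uc: "continuous_on {0..1} u" by (rule deriv_cont_on[OF ud])
  have a1c: "continuous_on {0..1} a1" by (rule deriv_cont_on[OF a1d])
  have gc: "continuous_on {0..1} \<gamma>" by (rule H1_cont[OF hi ge])
  have phic: "continuous_on {0..1} phi" unfolding phi_def by (intro continuous_intros gc)
  have a2nn: "0 \<le> a2 x" if "x \<in> {0..1}" for x
  proof -
    have "0 \<le> cos (u x)" using ub[OF that] by (intro cos_ge_zero) auto
    then have "0 \<le> \<beta> * F x * cos (u x)" using \<beta> Fnn[OF that] by simp
    then show ?thesis using EL[OF that] c by (simp add: zero_le_mult_iff)
  qed
  have phib: "0 \<le> phi s \<and> phi s \<le> (LINT t:{0..s}|lborel. \<bar>h t\<bar>)" if "s \<in> {0..1}" for s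
  proof -
    have si: "set_integrable lborel {0..s} h" by (rule set_integrable_subset[OF hi]) (use that in auto)
    have "phi s \<le> \<bar>\<gamma> s\<bar>" by (simp add: phi_def)
    also have "\<dots> = norm (LINT t:{0..s}|lborel. h t)" using ge[OF that] by simp
    also have "\<dots> \<le> (LINT t:{0..s}|lborel. norm (h t))" by (rule set_integral_norm_bound[OF si])
    finally show ?thesis by (simp add: phi_def)
  qed
  have T: "(LINT s:{0..1}|lborel. a2 s * phi s) \<le> (LINT t:{0..1}|lborel. \<bar>h t\<bar> * (- a1 t))"
    by (rule tonelli_part[OF a2c a2nn a1e hm hi phic phib])
  have habs: "set_integrable lborel {0..1} (\<lambda>t. \<bar>h t\<bar>)" by (rule set_integrable_abs[OF hi])
  have iR: "set_integrable lborel {0..1} (\<lambda>t. \<bar>h t\<bar> * (- a1 t))"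
    using si_cont_mult[OF continuous_on_minus[OF a1c] _ habs] hm by (simp add: mult.commute)
  have ia1: "set_integrable lborel {0..1} (\<lambda>x. (a1 x)\<^sup>2)" by (intro contI01 continuous_intros a1c)
  have Q: "(LINT t:{0..1}|lborel. \<bar>h t\<bar> * (- a1 t)) \<le> 1/2 * ((LINT x:{0..1}|lborel. (a1 x)\<^sup>2) + (LINT x:{0..1}|lborel. (h x)\<^sup>2))"
  proof -
    have "(LINT t:{0..1}|lborel. \<bar>h t\<bar> * (- a1 t)) \<le> (LINT x:{0..1}|lborel. 1/2 * ((a1 x)\<^sup>2 + (h x)\<^sup>2))"
    proof (rule set_integral_mono[OF iR])
      show "set_integrable lborel {0..1} (\<lambda>x. 1/2 * ((a1 x)\<^sup>2 + (h x)\<^sup>2))"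
        using ia1 hi2 by auto
      fix x
      have "0 \<le> (\<bar>h x\<bar> + a1 x)\<^sup>2" by simp
      then show "\<bar>h x\<bar> * (- a1 x) \<le> 1/2 * ((a1 x)\<^sup>2 + (h x)\<^sup>2)"
        by (simp add: power2_eq_square algebra_simps)
    qed
    also have "\<dots> = 1/2 * ((LINT x:{0..1}|lborel. (a1 x)\<^sup>2) + (LINT x:{0..1}|lborel. (h x)\<^sup>2))"
      using ia1 hi2 by simp
    finally show ?thesis .
  qed
  have IBP: "(LINT x:{0..1}|lborel. a2 x * u x) = - (LINT x:{0..1}|lborel. (a1 x)\<^sup>2)"
  proof -
    have D: "((\<lambda>x. a1 x * u x) has_vector_derivative (a2 x * u x + (a1 x)\<^sup>2)) (at x within {0..1})"
      if "x \<in> {0..1}" for x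
    proof -
      have "((\<lambda>x. a1 x * u x) has_real_derivative (a2 x * u x + (a1 x)\<^sup>2)) (at x within {0..1})"
        using DERIV_mult[OF a1d[rule_format, OF that] ud[rule_format, OF that]] by (simp add: algebra_simps power2_eq_square)
      then show ?thesis by (simp add: has_real_derivative_iff_has_vector_derivative)
    qed
    have a11: "a1 1 = 0" using a1e[of 1] by simp
    have "((\<lambda>x. a2 x * u x + (a1 x)\<^sup>2) has_integral (a1 1 * u 1 - a1 0 * u 0)) {0..1}"
      by (rule fundamental_theorem_of_calculus[OF _ D]) auto
    then have "integral {0..1} (\<lambda>x. a2 x * u x + (a1 x)\<^sup>2) = 0"
      using a11 u0 by (simp add: integral_unique)
    moreover have "integral {0..1} (\<lambda>x. a2 x * u x + (a1 x)\<^sup>2) = (LINT x:{0..1}|lborel. a2 x * u x + (a1 x)\<^sup>2)"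
      by (rule set_borel_integral_eq_integral(2)[symmetric])
         (auto intro!: contI01 continuous_intros a1c a2c uc)
    moreover have "(LINT x:{0..1}|lborel. a2 x * u x + (a1 x)\<^sup>2) = (LINT x:{0..1}|lborel. a2 x * u x) + (LINT x:{0..1}|lborel. (a1 x)\<^sup>2)"
      by (rule set_integral_add(2)) (auto intro!: contI01 continuous_intros a1c a2c uc)
    ultimately show ?thesis by simp
  qed
  define R where "R = (\<lambda>x. F x * (sin (\<gamma> x) - sin (u x) - cos (u x) * (- phi x - u x)))"
  have iFsg: "set_integrable lborel {0..1} (\<lambda>x. F x * sin (\<gamma> x))" by (intro contI01 continuous_intros Fc gc)
  have iFsu: "set_integrable lborel {0..1} (\<lambda>x. F x * sin (u x))" by (intro contI01 continuous_intros Fc uc)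
  have iR2: "set_integrable lborel {0..1} R" unfolding R_def by (intro contI01 continuous_intros Fc uc gc phic)
  have ia2p: "set_integrable lborel {0..1} (\<lambda>x. a2 x * phi x)" by (intro contI01 continuous_intros a2c phic)
  have ia2u: "set_integrable lborel {0..1} (\<lambda>x. a2 x * u x)" by (intro contI01 continuous_intros a2c uc)
  have lin: "\<beta> * (LINT x:{0..1}|lborel. F x * sin (\<gamma> x)) =
      \<beta> * (LINT x:{0..1}|lborel. F x * sin (u x)) - 2 * c * (LINT x:{0..1}|lborel. a2 x * phi x)
      - 2 * c * (LINT x:{0..1}|lborel. a2 x * u x) + \<beta> * (LINT x:{0..1}|lborel. R x)"
  proof -
    have pw: "\<beta> * (F x * sin (\<gamma> x)) = \<beta> * (F x * sin (u x)) - 2 * c * (a2 x * phi x) - 2 * c * (a2 x * u x) + \<beta> * R x"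
      if "x \<in> {0..1}" for x
    proof -
      have "\<beta> * R x = \<beta> * (F x * (sin (\<gamma> x) - sin (u x))) + (\<beta> * F x * cos (u x)) * (phi x + u x)"
        by (simp add: R_def algebra_simps)
      also have "\<dots> = \<beta> * (F x * (sin (\<gamma> x) - sin (u x))) + 2 * c * a2 x * (phi x + u x)"
        using EL[OF that] by simp
      finally show ?thesis by (simp add: algebra_simps)
    qed
    have "\<beta> * (LINT x:{0..1}|lborel. F x * sin (\<gamma> x)) = (LINT x:{0..1}|lborel. \<beta> * (F x * sin (\<gamma> x)))"
      by simp
    also have "\<dots> = (LINT x:{0..1}|lborel. \<beta> * (F x * sin (u x)) - 2 * c * (a2 x * phi x) - 2 * c * (a2 x * u x) + \<beta> * R x)"
      by (rule set_lebesgue_integral_cong) (auto simp: pw)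
    also have "\<dots> = \<beta> * (LINT x:{0..1}|lborel. F x * sin (u x)) - 2 * c * (LINT x:{0..1}|lborel. a2 x * phi x)
      - 2 * c * (LINT x:{0..1}|lborel. a2 x * u x) + \<beta> * (LINT x:{0..1}|lborel. R x)"
      using iFsu ia2p ia2u iR2 by (simp add: set_integral_add set_integral_diff)
    finally show ?thesis .
  qed
  have R_eq: "(LINT x:{0..1}|lborel. F x * (sin (\<gamma> x) - sin (u x) - cos (u x) * (- min \<bar>\<gamma> x\<bar> (pi/2) - u x)))
      = (LINT x:{0..1}|lborel. R x)" by (simp add: R_def phi_def)
  have "(LINT s:{0..1}|lborel. a2 s * phi s) \<le> 1/2 * ((LINT x:{0..1}|lborel. (a1 x)\<^sup>2) + (LINT x:{0..1}|lborel. (h x)\<^sup>2))"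
    using T Q by linarith
  then have cT: "c * (2 * (LINT s:{0..1}|lborel. a2 s * phi s)) \<le> c * ((LINT x:{0..1}|lborel. (a1 x)\<^sup>2) + (LINT x:{0..1}|lborel. (h x)\<^sup>2))"
    using c by (intro mult_left_mono) auto
  show ?thesis
    unfolding R_eq using lin IBP cT by (simp add: algebra_simps)
qed

lemma sin_fold_le: "sin (- min \<bar>y\<bar> (pi/2)) \<le> sin (y::real)"
proof (cases "\<bar>y\<bar> \<le> pi/2")
  case True
  then have m: "min \<bar>y\<bar> (pi/2) = \<bar>y\<bar>" by simp
  show ?thesis
  proof (cases "0 \<le> y")
    case True
    have "0 \<le> sin y" using True \<open>\<bar>y\<bar> \<le> pi/2\<close> by (intro sin_ge_zero) auto
    then show ?thesis using True m by simp
  next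
    case False then show ?thesis using m by simp
  qed
next
  case False
  then have "min \<bar>y\<bar> (pi/2) = pi/2" by simp
  then show ?thesis by simp
qed

lemma tangent_sin:
  fixes z a :: real
  assumes z: "-pi/2 \<le> z" "z \<le> 0" and a: "-pi/2 \<le> a" "a \<le> 0"
  shows "sin a + cos a * (z - a) \<le> sin z" and "sin a + cos a * (z - a) = sin z \<Longrightarrow> z = a"
proof -
  have strict: "sin a + cos a * (z - a) < sin z" if ne: "z \<noteq> a"
  proof (cases "z < a")
    case True
    obtain \<xi> where \<xi>: "z < \<xi>" "\<xi> < a" "sin a - sin z = (a - z) * cos \<xi>"
      using MVT2[OF True, of sin cos] by (auto intro: DERIV_sin)
    have "cos \<xi> < cos a" using \<xi> z a by (intro cos_monotone_minus_pi_0) auto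
    then have "(a - z) * cos \<xi> < (a - z) * cos a" using True by simp
    then show ?thesis using \<xi> by (simp add: algebra_simps)
  next
    case False
    then have lt: "a < z" using ne by simp
    obtain \<xi> where \<xi>: "a < \<xi>" "\<xi> < z" "sin z - sin a = (z - a) * cos \<xi>"
      using MVT2[OF lt, of sin cos] by (auto intro: DERIV_sin)
    have "cos a < cos \<xi>" using \<xi> z a by (intro cos_monotone_minus_pi_0) auto
    then have "(z - a) * cos a < (z - a) * cos \<xi>" using lt by simp
    then show ?thesis using \<xi> by (simp add: algebra_simps)
  qed
  show "sin a + cos a * (z - a) \<le> sin z" using strict by (cases "z = a") auto
  show "sin a + cos a * (z - a) = sin z \<Longrightarrow> z = a" using strict by force
qed

lemma bracket_nonneg:
  fixes y a :: real
  assumes a: "-pi/2 \<le> a" "a \<le> 0"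
  shows "0 \<le> sin y - sin a - cos a * (- min \<bar>y\<bar> (pi/2) - a)"
proof -
  have "sin a + cos a * (- min \<bar>y\<bar> (pi/2) - a) \<le> sin (- min \<bar>y\<bar> (pi/2))"
    using a by (intro tangent_sin(1)) auto
  then show ?thesis using sin_fold_le[of y] by simp
qed

lemma bracket_zero:
  fixes y a :: real
  assumes a: "-pi/2 < a" "a \<le> 0"
    and z: "sin y - sin a - cos a * (- min \<bar>y\<bar> (pi/2) - a) = 0"
  shows "y = a"
proof -
  let ?p = "- min \<bar>y\<bar> (pi/2)"
  have t: "sin a + cos a * (?p - a) \<le> sin ?p" using a by (intro tangent_sin(1)) auto
  have f: "sin ?p \<le> sin y" by (rule sin_fold_le)
  have e1: "sin a + cos a * (?p - a) = sin ?p" using t f z by linarith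
  have pa: "?p = a" using a by (intro tangent_sin(2)[OF _ _ _ _ e1]) auto
  have sy: "sin y = sin a" using e1 f z pa by simp
  have ya: "\<bar>y\<bar> = - a" using pa a by (auto simp: min_def split: if_splits)
  show ?thesis
  proof (cases "y = a")
    case False
    then have y: "y = - a" "a < 0" using ya a by (auto simp: abs_if split: if_splits)
    have "sin a < 0" using y a by (intro sin_less_zero) auto 
    then show ?thesis using sy y by simp
  qed
qed

lemma zero_h:
  fixes h :: "real \<Rightarrow> real"
  assumes hm: "h \<in> borel_measurable lborel" and hi2: "set_integrable lborel {0..1} (\<lambda>x. (h x)\<^sup>2)"
    and le: "(LINT x:{0..1}|lborel. (h x)\<^sup>2) \<le> 0" and x: "x \<in> {0..1}"
  shows "(LINT t:{0..x}|lborel. h t) = 0"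
proof -
  have i: "integrable lborel (\<lambda>t. indicator {0..1} t * (h t)\<^sup>2)"
    using hi2 by (simp add: set_integrable_def)
  have nn: "0 \<le> integral\<^sup>L lborel (\<lambda>t. indicator {0..1} t * (h t)\<^sup>2)"
    by (intro Bochner_Integration.integral_nonneg) (auto simp: indicator_def)
  have le': "integral\<^sup>L lborel (\<lambda>t. indicator {0..1} t * (h t)\<^sup>2) \<le> 0"
    using le by (simp add: set_lebesgue_integral_def)
  have "integral\<^sup>L lborel (\<lambda>t. indicator {0..1} t * (h t)\<^sup>2) = 0"
    using nn le' by linarith
  then have ae: "AE t in lborel. indicator {0..1} t * (h t)\<^sup>2 = 0"
    using integral_nonneg_eq_0_iff_AE[OF i] by (auto simp: indicator_def)
  have "AE t in lborel. indicator {0..x} t *\<^sub>R h t = 0"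
    using ae by eventually_elim (use x in \<open>auto simp: indicator_def split: if_splits\<close>)
  then show ?thesis unfolding set_lebesgue_integral_def by (rule integral_eq_zero_AE)
qed

lemma LBINT01: "(LBINT x=0..1. f x) = (LINT x:{0..1}|lborel. f x)"
  using interval_integral_Icc[of 0 1 f] by (simp add: zero_ereal_def one_ereal_def)

lemma LBINT0x: "0 \<le> x \<Longrightarrow> (LBINT s=0..x. f s) = (LINT s:{0..x}|lborel. f s)"
  using interval_integral_Icc[of 0 x f] by (simp add: zero_ereal_def)

lemma LBINTx1: "x \<le> 1 \<Longrightarrow> (LBINT s=x..1. f s) = (LINT s:{x..1}|lborel. f s)"
  using interval_integral_Icc[of x 1 f] by (simp add: one_ereal_def)

theorem mainTheorem12:
  fixes \<mu> \<beta> :: real and f :: "real \<Rightarrow> real"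
  assumes "\<mu> > 0" and "\<beta> \<ge> 0" and "smooth_on_cl01 f"
    and "\<forall>x\<in>{0<..<1}. f x > 0"
  shows "\<exists>\<alpha>. is_minimizer \<mu> \<beta> f \<alpha> \<and>
           (\<forall>\<gamma>. is_minimizer \<mu> \<beta> f \<gamma> \<longrightarrow> (\<forall>x\<in>{0..1}. \<gamma> x = \<alpha> x)) \<and>
           (\<forall>x\<in>{0..1}. - pi / 2 \<le> \<alpha> x \<and> \<alpha> x \<le> 0) \<and>
           (\<exists>a1 a2. C2_cl01 \<alpha> a1 a2 \<and>
              (\<forall>x\<in>{0<..<1}. - \<mu> / (2 * pi) * a2 x + \<beta> * Fprim f x * cos (\<alpha> x) = 0) \<and>
              \<alpha> 0 = 0 \<and> a1 1 = 0)"
proof -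
  note mu = assms(1) and beta = assms(2)
  obtain D where D0: "\<forall>x\<in>{0..1}. D 0 x = f x" and Dc: "\<forall>k. continuous_on {0..1} (D k)"
    using assms(3) unfolding smooth_on_cl01_def by auto
  have fc: "continuous_on {0..1} f"
    using continuous_on_eq[OF Dc[rule_format, of 0]] D0 by auto
  have fnn: "0 \<le> f x" if "x \<in> {0..1}" for x
    by (rule continuous_ge_on_closure[of "{0<..<1}"]) (use fc that assms(4) in \<open>auto simp: less_imp_le\<close>)
  define F where "F = (\<lambda>x. integral {x..1} f)"
  have fi: "\<And>x. x \<in> {0..1} \<Longrightarrow> f integrable_on {x..1}"
    by (intro integrable_continuous_real continuous_on_subset[OF fc]) auto
  have Fc: "continuous_on {0..1} F"
    unfolding F_def by (rule indefinite_integral_continuous_1'[OF integrable_continuous_real[OF fc]])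
  have Fnn: "0 \<le> F x" if "x \<in> {0..1}" for x
    unfolding F_def using that fnn fi[OF that]
    by (intro Henstock_Kurzweil_Integration.integral_nonneg) auto
  have Fpos: "0 < F x" if x: "x \<in> {0..<1}" for x
  proof (rule ccontr)
    assume "\<not> 0 < F x"
    then have F0: "F x = 0" using Fnn[of x] x by auto
    have "(f has_integral 0) (cbox x 1)"
      using F0 fi[of x] x unfolding F_def by (simp add: has_integral_integral)
    then have "f ((x + 1) / 2) = 0"
      by (intro has_integral_0_cbox_imp_0[of x 1 f]) (use x fnn in \<open>auto intro: continuous_on_subset[OF fc]\<close>)
    moreover have "0 < f ((x + 1) / 2)" using assms(4) x by auto
    ultimately show False by simp
  qed
  have Fprim_eq: "Fprim f x = F x" if "x \<in> {0..1}" for x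
  proof -
    have "set_integrable lborel {x..1} f"
      by (rule borel_integrable_atLeastAtMost') (use that in \<open>auto intro: continuous_on_subset[OF fc]\<close>)
    then show ?thesis unfolding Fprim_def F_def using that
      by (simp add: LBINTx1 set_borel_integral_eq_integral)
  qed
  define c where "c = \<mu> / (4 * pi)"
  define k where "k = 2 * pi * \<beta> / \<mu>"
  have c: "0 < c" using mu by (simp add: c_def)
  have k: "0 \<le> k" using mu beta by (simp add: k_def)
  define P where "P = (\<lambda>x. k * F x)"
  have Pc: "continuous_on {0..1} P" unfolding P_def by (intro continuous_intros Fc)
  have Pnn: "\<And>x. x \<in> {0..1} \<Longrightarrow> 0 \<le> P x" unfolding P_def using k Fnn by simp
  obtain B where B: "\<And>x. x \<in> {0..1} \<Longrightarrow> \<bar>P x\<bar> \<le> B" using cont_bounded_on01[OF Pc] by blast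
  interpret bvp P B
  proof (unfold_locales)
    show "continuous_on {0..1} P" by (rule Pc)
    fix x :: real assume x: "x \<in> {0..1}"
    show "0 \<le> P x" using Pnn[OF x] .
    show "P x \<le> B" using B[OF x] by linarith
  qed
  obtain u a1 a2 a where a: "-pi/2 < a" "a \<le> 0"
    and ud: "\<forall>x\<in>{0..1}. (u has_real_derivative a1 x) (at x within {0..1})"
    and a1d: "\<forall>x\<in>{0..1}. (a1 has_real_derivative a2 x) (at x within {0..1})"
    and a2c: "continuous_on {0..1} a2"
    and a2e: "\<forall>x\<in>{0..1}. a2 x = P x * cos (u x)" and u0: "u 0 = 0" and a11: "a1 1 = 0"
    and ub: "\<forall>x\<in>{0..1}. a \<le> u x \<and> u x \<le> 0"
    and a1e: "\<forall>x\<in>{0..1}. a1 x = - integral {x..1} a2"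
    using bvp_solution by blast
  have EL: "\<beta> * F x * cos (u x) = 2 * c * a2 x" if "x \<in> {0..1}" for x
    using a2e that mu by (simp add: P_def k_def c_def field_simps)
  have ub2: "-pi/2 \<le> u x \<and> u x \<le> 0" if "x \<in> {0..1}" for x using ub that a by force
  have a1c: "continuous_on {0..1} a1" by (rule deriv_cont_on[OF a1d])
  have uc: "continuous_on {0..1} u" by (rule deriv_cont_on[OF ud])
  define g where "g = (\<lambda>x. a1 (clamp01 x))"
  have gc: "continuous_on UNIV g" unfolding g_def by (rule cont_ext01[OF a1c])
  have gS: "\<And>x. x \<in> {0..1} \<Longrightarrow> g x = a1 x" by (simp add: g_def clamp01_id)
  have H1u: "H1_with_deriv u g"
    unfolding H1_with_deriv_def
  proof (intro conjI ballI)
    show "g \<in> borel_measurable lborel"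
      using borel_measurable_continuous_onI[OF gc] by simp
    show "set_integrable lborel {0..1} g"
      by (intro contI01 continuous_on_subset[OF gc]) auto
    show "set_integrable lborel {0..1} (\<lambda>x. (g x)\<^sup>2)"
      by (intro contI01 continuous_intros continuous_on_subset[OF gc]) auto
    fix x :: real assume x: "x \<in> {0..1}"
    have D: "(u has_vector_derivative a1 t) (at t within {0..x})" if "t \<in> {0..x}" for t
    proof -
      have t1: "t \<in> {0..1}" using that x by auto
      have "(u has_vector_derivative a1 t) (at t within {0..1})"
        using ud t1 by (simp add: has_real_derivative_iff_has_vector_derivative)
      then show ?thesis by (rule has_vector_derivative_within_subset) (use x in auto)
    qed
    have "(a1 has_integral (u x - u 0)) {0..x}"
      by (rule fundamental_theorem_of_calculus[OF _ D]) (use x in auto)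
    then have "integral {0..x} a1 = u x - u 0" by (rule integral_unique)
    moreover have "integral {0..x} g = integral {0..x} a1"
      by (rule integral_cong) (use x gS in auto)
    moreover have "(LBINT s=0..x. g s) = integral {0..x} g"
      using x by (simp add: LBINT0x set_borel_integral_eq_integral borel_integrable_atLeastAtMost' continuous_on_subset[OF gc])
    ultimately show "u x = u 0 + (LBINT s=0..x. g s)" by simp
  qed
  have Eform: "energy \<mu> \<beta> f \<gamma> h = c * (LINT x:{0..1}|lborel. (h x)\<^sup>2) + \<beta> * (LINT x:{0..1}|lborel. F x * sin (\<gamma> x))"
    for \<gamma> h :: "real \<Rightarrow> real"
  proof -
    have "(LINT x:{0..1}|lborel. Fprim f x * sin (\<gamma> x)) = (LINT x:{0..1}|lborel. F x * sin (\<gamma> x))"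
      by (rule set_lebesgue_integral_cong) (auto simp: Fprim_eq)
    then show ?thesis unfolding energy_def c_def by (simp add: LBINT01 LBINT0x)
  qed
  have Eu: "energy \<mu> \<beta> f u g = c * (LINT x:{0..1}|lborel. (a1 x)\<^sup>2) + \<beta> * (LINT x:{0..1}|lborel. F x * sin (u x))"
  proof -
    have "(LINT x:{0..1}|lborel. (g x)\<^sup>2) = (LINT x:{0..1}|lborel. (a1 x)\<^sup>2)"
      by (rule set_lebesgue_integral_cong) (auto simp: gS)
    then show ?thesis by (simp add: Eform)
  qed
  define Rb where "Rb = (\<lambda>\<gamma> x. F x * (sin (\<gamma> x) - sin (u x) - cos (u x) * (- min \<bar>\<gamma> x\<bar> (pi/2) - u x)))"
  have a1e': "\<And>t. t \<in> {0..1} \<Longrightarrow> a1 t = - integral {t..1} a2" using a1e by blast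
  have main: "energy \<mu> \<beta> f u g + \<beta> * (LINT x:{0..1}|lborel. Rb \<gamma> x) \<le> energy \<mu> \<beta> f \<gamma> h"
    if g0: "\<gamma> 0 = 0" and H: "H1_with_deriv \<gamma> h" for \<gamma> h
  proof -
    have hm: "h \<in> borel_measurable lborel" and hi: "set_integrable lborel {0..1} h"
      and hi2: "set_integrable lborel {0..1} (\<lambda>x. (h x)\<^sup>2)"
      and he: "\<forall>x\<in>{0..1}. \<gamma> x = \<gamma> 0 + (LBINT s=0..x. h s)"
      using H unfolding H1_with_deriv_def by blast+
    have ge: "\<gamma> x = (LINT t:{0..x}|lborel. h t)" if "x \<in> {0..1}" for x
    proof -
      have "\<gamma> x = \<gamma> 0 + (LBINT s=0..x. h s)" using he that by blast
      then show ?thesis using g0 LBINT0x[of x h] that by simp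
    qed
    have "c * (LINT x:{0..1}|lborel. (a1 x)\<^sup>2) + \<beta> * (LINT x:{0..1}|lborel. F x * sin (u x))
       + \<beta> * (LINT x:{0..1}|lborel. F x * (sin (\<gamma> x) - sin (u x) - cos (u x) * (- min \<bar>\<gamma> x\<bar> (pi/2) - u x)))
       \<le> c * (LINT x:{0..1}|lborel. (h x)\<^sup>2) + \<beta> * (LINT x:{0..1}|lborel. F x * sin (\<gamma> x))"
      by (rule key_ineq[OF c beta Fc Fnn ud a1d a2c a1e' u0 ub2 EL hm hi hi2 ge])
    moreover have "energy \<mu> \<beta> f \<gamma> h = c * (LINT x:{0..1}|lborel. (h x)\<^sup>2) + \<beta> * (LINT x:{0..1}|lborel. F x * sin (\<gamma> x))"
      by (rule Eform)
    ultimately show ?thesis unfolding Eu Rb_def by linarith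
  qed
  have Rbnn: "0 \<le> (LINT x:{0..1}|lborel. Rb \<gamma> x)" for \<gamma>
  proof -
    have "0 \<le> indicator {0..1} x * Rb \<gamma> x" for x
      using Fnn[of x] bracket_nonneg[of "u x" "\<gamma> x"] ub2[of x]
      by (auto simp: indicator_def Rb_def)
    then show ?thesis unfolding set_lebesgue_integral_def
      by (intro Bochner_Integration.integral_nonneg) simp
  qed
  have minim: "is_minimizer \<mu> \<beta> f u"
    unfolding is_minimizer_def
  proof (intro conjI exI[of _ g] allI impI)
    show "u 0 = 0" by (rule u0)
    show "H1_with_deriv u g" by (rule H1u)
    fix \<gamma> h assume "\<gamma> 0 = 0 \<and> H1_with_deriv \<gamma> h"
    then have "energy \<mu> \<beta> f u g + \<beta> * (LINT x:{0..1}|lborel. Rb \<gamma> x) \<le> energy \<mu> \<beta> f \<gamma> h"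
      using main by blast
    moreover have "0 \<le> \<beta> * (LINT x:{0..1}|lborel. Rb \<gamma> x)" using beta Rbnn by simp
    ultimately show "energy \<mu> \<beta> f u g \<le> energy \<mu> \<beta> f \<gamma> h" by linarith
  qed
  have uniq: "\<forall>x\<in>{0..1}. \<gamma> x = u x" if mg: "is_minimizer \<mu> \<beta> f \<gamma>" for \<gamma>
  proof -
    obtain h where g0: "\<gamma> 0 = 0" and H: "H1_with_deriv \<gamma> h"
      and minh: "\<And>\<gamma>' h'. \<gamma>' 0 = 0 \<and> H1_with_deriv \<gamma>' h' \<Longrightarrow> energy \<mu> \<beta> f \<gamma> h \<le> energy \<mu> \<beta> f \<gamma>' h'"
      using mg unfolding is_minimizer_def by blast
    have le1: "energy \<mu> \<beta> f \<gamma> h \<le> energy \<mu> \<beta> f u g" using minh u0 H1u by blast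
    have le2: "energy \<mu> \<beta> f u g + \<beta> * (LINT x:{0..1}|lborel. Rb \<gamma> x) \<le> energy \<mu> \<beta> f \<gamma> h"
      by (rule main[OF g0 H])
    have hm: "h \<in> borel_measurable lborel" and hi: "set_integrable lborel {0..1} h"
      and hi2: "set_integrable lborel {0..1} (\<lambda>x. (h x)\<^sup>2)"
      and he: "\<forall>x\<in>{0..1}. \<gamma> x = \<gamma> 0 + (LBINT s=0..x. h s)"
      using H unfolding H1_with_deriv_def by blast+
    have ge: "\<gamma> x = (LINT t:{0..x}|lborel. h t)" if "x \<in> {0..1}" for x
    proof -
      have "\<gamma> x = \<gamma> 0 + (LBINT s=0..x. h s)" using he that by blast
      then show ?thesis using g0 LBINT0x[of x h] that by simp
    qed
    have gc: "continuous_on {0..1} \<gamma>" by (rule H1_cont[OF hi ge])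
    show ?thesis
    proof (cases "\<beta> = 0")
      case True
      then have k0: "k = 0" by (simp add: k_def)
      have a20: "a2 x = 0" if "x \<in> {0..1}" for x using a2e that by (simp add: P_def k0)
      have a10: "a1 x = 0" if "x \<in> {0..1}" for x
      proof -
        have "integral {x..1} a2 = integral {x..1} (\<lambda>_. 0)"
          by (rule integral_cong) (use that a20 in auto)
        then show ?thesis using a1e that by simp
      qed
      have u00: "u x = 0" if x: "x \<in> {0..1}" for x
      proof -
        have D: "(u has_vector_derivative a1 t) (at t within {0..x})" if "t \<in> {0..x}" for t
        proof -
          have t1: "t \<in> {0..1}" using that x by auto
          have "(u has_vector_derivative a1 t) (at t within {0..1})"
            using ud t1 by (simp add: has_real_derivative_iff_has_vector_derivative)
          then show ?thesis by (rule has_vector_derivative_within_subset) (use x in auto)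
        qed
        have "(a1 has_integral (u x - u 0)) {0..x}"
          by (rule fundamental_theorem_of_calculus[OF _ D]) (use x in auto)
        then have "integral {0..x} a1 = u x - u 0" by (rule integral_unique)
        moreover have "integral {0..x} a1 = integral {0..x} (\<lambda>_. 0)"
          by (rule integral_cong) (use x a10 in auto)
        ultimately show ?thesis using u0 by simp
      qed
      have "(LINT x:{0..1}|lborel. (a1 x)\<^sup>2) = 0"
        unfolding set_lebesgue_integral_def
        by (intro integral_eq_zero_AE AE_I2) (auto simp: indicator_def a10)
      then have "energy \<mu> \<beta> f u g = 0" unfolding Eu using True by simp
      then have "c * (LINT x:{0..1}|lborel. (h x)\<^sup>2) \<le> 0" using le1 Eform[of \<gamma> h] True by simp
      then have "(LINT x:{0..1}|lborel. (h x)\<^sup>2) \<le> 0" using c by (simp add: mult_le_0_iff)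
      then show ?thesis using zero_h[OF hm hi2] ge u00 by simp
    next
      case False
      then have bpos: "0 < \<beta>" using beta by simp
      have "\<beta> * (LINT x:{0..1}|lborel. Rb \<gamma> x) \<le> 0" using le1 le2 by linarith
      then have "(LINT x:{0..1}|lborel. Rb \<gamma> x) \<le> 0" using bpos by (simp add: mult_le_0_iff)
      then have R0: "(LINT x:{0..1}|lborel. Rb \<gamma> x) = 0" using Rbnn[of \<gamma>] by simp
      have Rc: "continuous_on {0..1} (Rb \<gamma>)" unfolding Rb_def by (intro continuous_intros Fc uc gc)
      have "(Rb \<gamma> has_integral 0) {0..1}"
        using set_borel_integral_eq_integral[OF contI01[OF Rc]] R0
        by (metis has_integral_integrable_integral)
      then have Rz: "Rb \<gamma> x = 0" if "x \<in> {0..1}" for x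
        by (intro has_integral_0_cbox_imp_0[of 0 1 "Rb \<gamma>"])
           (use that Rc Fnn bracket_nonneg ub2 in \<open>auto simp: Rb_def\<close>)
      have eq: "\<gamma> x - u x = 0" if x: "x \<in> {0..<1}" for x
      proof -
        have x1: "x \<in> {0..1}" using x by auto
        have "F x * (sin (\<gamma> x) - sin (u x) - cos (u x) * (- min \<bar>\<gamma> x\<bar> (pi/2) - u x)) = 0"
          using Rz[OF x1] by (simp add: Rb_def)
        then have "sin (\<gamma> x) - sin (u x) - cos (u x) * (- min \<bar>\<gamma> x\<bar> (pi/2) - u x) = 0"
          using Fpos[OF x] by simp
        moreover have "-pi/2 < u x" "u x \<le> 0" using ub x1 a by force+
        ultimately show ?thesis using bracket_zero by simp
      qed
      have "\<gamma> x - u x = 0" if "x \<in> {0..1}" for x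
        by (rule continuous_constant_on_closure[of "{0..<1}"]) (use that eq gc uc in \<open>auto intro!: continuous_intros\<close>)
      then show ?thesis by simp
    qed
  qed
  have part3: "\<forall>x\<in>{0..1}. - pi / 2 \<le> u x \<and> u x \<le> 0" using ub2 by auto
  have part4: "\<exists>a1 a2. C2_cl01 u a1 a2 \<and> (\<forall>x\<in>{0<..<1}. - \<mu> / (2 * pi) * a2 x + \<beta> * Fprim f x * cos (u x) = 0) \<and> u 0 = 0 \<and> a1 1 = 0"
  proof (rule exI[of _ a1], rule exI[of _ a2], intro conjI ballI)
    show "C2_cl01 u a1 a2" unfolding C2_cl01_def using ud a1d a2c by blast
    show "u 0 = 0" by (rule u0)
    show "a1 1 = 0" by (rule a11)
    fix x :: real assume x: "x \<in> {0<..<1}"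
    then have x1: "x \<in> {0..1}" by auto
    show "- \<mu> / (2 * pi) * a2 x + \<beta> * Fprim f x * cos (u x) = 0"
      using a2e x1 mu Fprim_eq[OF x1] by (simp add: P_def k_def field_simps)
  qed
  show ?thesis using minim uniq part3 part4 by blast
qed

end
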